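(* Let $(P,\leqslant)$ be a conditionally-complete interpolating poset, let $P^* := \{x \in P : \exists\, y \in P,\ y \ll x\}$, and let $Q$ be a kernel retract of $P^*$. Then $Q$ is a conditionally-complete subposet of $P$. Moreover, for every nonempty subset $D$ of $Q$ bounded above in $P$, the supremum of $D$ in $Q$ exists and equals its supremum $\bigvee D$ in $P$.
   Context: A poset is conditionally-complete if every nonempty subset bounded above has a supremum. A nonempty subset $D$ is directed if any two elements of $D$ have an upper bound in $D$. For a poset $R$ and $x,y \in R$, $x \ll_R y$ ($x$ way-below $y$ in $R$) means: for every directed subset $D$ of $R$ bounded above in $R$ with supremum $d_0$ in $R$, $y \leqslant d_0$ implies $x \leqslant d$ for some $d \in D$; write $\ll$ for $\ll_P$. $P$ is interpolating if whenever $x \ll y$ there is $z$ with $x \ll z \ll y$. A kernel on $P^*$ is a map $j: P^* \to P^*$ with $j(j(x)) = j(x)$, $x \leqslant y \Rightarrow j(x) \leqslant j(y)$, and $j(x) \leqslant x$ for all $x,y \in P^*$. A kernel retraction is a map $k: P^* \to Q$, where $Q = \{x \in P^* : k(x) = x\}$, such that $x \mapsto k(x)$ is a kernel on $P^*$ and for every directed subset $D$ of $P^*$ bounded above, $k(\bigvee D) = \bigvee_Q k(D)$ (supremum in $Q$); such a $Q$ is called a kernel retract of $P^*$. A subset $Q \subseteq P$ (with the induced order) is a subposet of $P$ if for all $x,y \in Q$: $x \ll_Q y \iff x \ll y$. *)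

theory Defs
  imports Main
begin

text \<open>The poset P is the whole type 'a with its partial order; subsets carry the induced order.\<close>

definition upper_bound_of :: "'a::order set \<Rightarrow> 'a \<Rightarrow> bool" where
  "upper_bound_of D u \<longleftrightarrow> (\<forall>d\<in>D. d \<le> u)"

definition bounded_above_in :: "'a::order set \<Rightarrow> 'a set \<Rightarrow> bool" where
  "bounded_above_in R D \<longleftrightarrow> (\<exists>u\<in>R. upper_bound_of D u)"

definition is_sup_in :: "'a::order set \<Rightarrow> 'a set \<Rightarrow> 'a \<Rightarrow> bool" where
  "is_sup_in R D s \<longleftrightarrow> s \<in> R \<and> upper_bound_of D s \<and> (\<forall>u\<in>R. upper_bound_of D u \<longrightarrow> s \<le> u)"

definition directed :: "'a::order set \<Rightarrow> bool" where
  "directed D \<longleftrightarrow> D \<noteq> {} \<and> (\<forall>x\<in>D. \<forall>y\<in>D. \<exists>z\<in>D. x \<le> z \<and> y \<le> z)"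

definition cond_complete_in :: "'a::order set \<Rightarrow> bool" where
  "cond_complete_in R \<longleftrightarrow>
     (\<forall>D. D \<subseteq> R \<and> D \<noteq> {} \<and> bounded_above_in R D \<longrightarrow> (\<exists>s. is_sup_in R D s))"

definition way_below_in :: "'a::order set \<Rightarrow> 'a \<Rightarrow> 'a \<Rightarrow> bool" where
  "way_below_in R x y \<longleftrightarrow>
     (\<forall>D d0. D \<subseteq> R \<and> directed D \<and> bounded_above_in R D \<and> is_sup_in R D d0 \<and> y \<le> d0
        \<longrightarrow> (\<exists>d\<in>D. x \<le> d))"

abbreviation way_below :: "'a::order \<Rightarrow> 'a \<Rightarrow> bool" where
  "way_below x y \<equiv> way_below_in UNIV x y"

definition interpolating :: "'a::order itself \<Rightarrow> bool" where
  "interpolating _ \<longleftrightarrow> (\<forall>x y::'a. way_below x y \<longrightarrow> (\<exists>z. way_below x z \<and> way_below z y))"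

definition Pstar :: "'a::order set" where
  "Pstar = {x. \<exists>y. way_below y x}"

definition kernel_on :: "'a::order set \<Rightarrow> ('a \<Rightarrow> 'a) \<Rightarrow> bool" where
  "kernel_on S j \<longleftrightarrow> (\<forall>x\<in>S. j x \<in> S) \<and> (\<forall>x\<in>S. j (j x) = j x)
     \<and> (\<forall>x\<in>S. \<forall>y\<in>S. x \<le> y \<longrightarrow> j x \<le> j y) \<and> (\<forall>x\<in>S. j x \<le> x)"

definition kernel_retraction :: "('a::order \<Rightarrow> 'a) \<Rightarrow> bool" where
  "kernel_retraction k \<longleftrightarrow> kernel_on Pstar k \<and>
     (\<forall>D s. D \<subseteq> Pstar \<and> directed D \<and> bounded_above_in Pstar D \<and> is_sup_in Pstar D s
        \<longrightarrow> is_sup_in {x\<in>Pstar. k x = x} (k ` D) (k s))"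

definition kernel_retract :: "'a::order set \<Rightarrow> bool" where
  "kernel_retract Q \<longleftrightarrow> (\<exists>k. kernel_retraction k \<and> Q = {x\<in>Pstar. k x = x})"

definition subposet :: "'a::order set \<Rightarrow> bool" where
  "subposet Q \<longleftrightarrow> (\<forall>x\<in>Q. \<forall>y\<in>Q. way_below_in Q x y \<longleftrightarrow> way_below x y)"

end

theory Submission
  imports Defs
begin

lemma wb_mono: "way_below_in R w z \<Longrightarrow> z \<le> d \<Longrightarrow> way_below_in R w d"
  unfolding way_below_in_def by (meson order_trans)

lemma Pstar_up: "x \<in> Pstar \<Longrightarrow> x \<le> y \<Longrightarrow> y \<in> Pstar"
  unfolding Pstar_def using wb_mono by blast

lemma sup_unique: "is_sup_in R D s \<Longrightarrow> is_sup_in R D t \<Longrightarrow> s = t"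
  unfolding is_sup_in_def by (meson order_antisym)

lemma supQ:
  assumes cc: "cond_complete_in (UNIV :: 'a::order set)"
    and kr: "kernel_retraction k" and QD: "Q = {x\<in>Pstar. k x = x}"
    and D: "D \<subseteq> Q" "D \<noteq> {}" "bounded_above_in UNIV D"
  shows "is_sup_in Q D s \<and> is_sup_in UNIV D s \<longleftrightarrow> is_sup_in UNIV D s"
    and "\<exists>s. is_sup_in UNIV D (s::'a)"
proof -
  show "\<exists>s. is_sup_in UNIV D (s::'a)" using cc D unfolding cond_complete_in_def by blast
next
  have ker: "kernel_on Pstar k" using kr unfolding kernel_retraction_def by blast
  show "is_sup_in Q D s \<and> is_sup_in UNIV D s \<longleftrightarrow> is_sup_in UNIV D s"
  proof
    assume s: "is_sup_in UNIV D s"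
    obtain d where d: "d \<in> D" using D by blast
    have "d \<le> s" using s d unfolding is_sup_in_def upper_bound_of_def by blast
    hence sP: "s \<in> Pstar" using Pstar_up d D QD by blast
    have ks: "k s \<le> s" using ker sP unfolding kernel_on_def by blast
    have "upper_bound_of D (k s)"
      unfolding upper_bound_of_def
    proof
      fix e assume e: "e \<in> D"
      have "e \<le> s" using s e unfolding is_sup_in_def upper_bound_of_def by blast
      moreover have "e \<in> Pstar" "k e = e" using e D QD by auto
      ultimately show "e \<le> k s" using ker sP unfolding kernel_on_def by metis
    qed
    hence "s \<le> k s" using s unfolding is_sup_in_def by blast
    hence "k s = s" using ks by simp
    hence "s \<in> Q" using QD sP by blast
    thus "is_sup_in Q D s \<and> is_sup_in UNIV D s" using s unfolding is_sup_in_def by blast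
  qed simp
qed

theorem lemma2p4:
  fixes Q :: "'a::order set"
  assumes "cond_complete_in (UNIV :: 'a set)"
    and "interpolating TYPE('a)"
    and "kernel_retract Q"
  shows "cond_complete_in Q \<and> subposet Q \<and>
    (\<forall>D. D \<subseteq> Q \<and> D \<noteq> {} \<and> bounded_above_in UNIV D \<longrightarrow>
       (\<exists>s. is_sup_in Q D s \<and> is_sup_in UNIV D s))"
proof -
  obtain k where kr: "kernel_retraction k" and QD: "Q = {x\<in>Pstar. k x = x}"
    using assms(3) unfolding kernel_retract_def by blast
  have ker: "kernel_on Pstar k" using kr unfolding kernel_retraction_def by blast
  have P3: "\<forall>D. D \<subseteq> Q \<and> D \<noteq> {} \<and> bounded_above_in UNIV D \<longrightarrow>
       (\<exists>s. is_sup_in Q D s \<and> is_sup_in UNIV D s)"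
  proof (intro allI impI)
    fix D assume D: "D \<subseteq> Q \<and> D \<noteq> {} \<and> bounded_above_in UNIV D"
    then obtain s where s: "is_sup_in UNIV D s" using supQ(2)[OF assms(1) kr QD] by blast
    have "is_sup_in Q D s \<and> is_sup_in UNIV D s"
      using supQ(1)[OF assms(1) kr QD, of D s] D s by blast
    thus "\<exists>s. is_sup_in Q D s \<and> is_sup_in UNIV D s" by blast
  qed
  have P1: "cond_complete_in Q"
    unfolding cond_complete_in_def
  proof (intro allI impI)
    fix D assume D: "D \<subseteq> Q \<and> D \<noteq> {} \<and> bounded_above_in Q D"
    hence "bounded_above_in UNIV D" unfolding bounded_above_in_def by blast
    thus "\<exists>s. is_sup_in Q D s" using P3 D by blast
  qed
  have P2: "subposet Q"
    unfolding subposet_def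
  proof (intro ballI iffI)
    fix x y assume xQ: "x \<in> Q" and yQ: "y \<in> Q" and wb: "way_below x y"
    show "way_below_in Q x y"
      unfolding way_below_in_def
    proof (intro allI impI)
      fix D d0 assume H: "D \<subseteq> Q \<and> directed D \<and> bounded_above_in Q D \<and> is_sup_in Q D d0 \<and> y \<le> d0"
      hence b: "bounded_above_in UNIV D" unfolding bounded_above_in_def by blast
      have "D \<noteq> {}" using H unfolding directed_def by blast
      then obtain s where s: "is_sup_in Q D s" "is_sup_in UNIV D s" using P3 H b by blast
      have "s = d0" using sup_unique s(1) H by blast
      thus "\<exists>d\<in>D. x \<le> d" using wb H b s(2) unfolding way_below_in_def by blast
    qed
  next
    fix x y assume xQ: "x \<in> Q" and yQ: "y \<in> Q" and wb: "way_below_in Q x y"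
    show "way_below x y"
      unfolding way_below_in_def
    proof (intro allI impI)
      fix D d0 assume H: "D \<subseteq> UNIV \<and> directed D \<and> bounded_above_in UNIV D \<and> is_sup_in UNIV D d0 \<and> y \<le> d0"
      have yP: "y \<in> Pstar" "k y = y" using yQ QD by auto
      then obtain w where w: "way_below w y" unfolding Pstar_def by blast
      then obtain z where z1: "way_below w z" and z2: "way_below z y"
        using assms(2) unfolding interpolating_def by blast
      then obtain d where d: "d \<in> D" "z \<le> d"
        using H unfolding way_below_in_def by blast
      have dP: "d \<in> Pstar" using wb_mono[OF z1 d(2)] unfolding Pstar_def by blast
      define D' where "D' = {e\<in>D. d \<le> e}"
      have D'P: "D' \<subseteq> Pstar" unfolding D'_def using Pstar_up dP by blast
      have dirD: "\<forall>a\<in>D. \<forall>b\<in>D. \<exists>c\<in>D. a \<le> c \<and> b \<le> c" using H unfolding directed_def by blast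
      have dirD': "directed D'"
        unfolding directed_def
      proof (intro conjI ballI)
        show "D' \<noteq> {}" using d unfolding D'_def by blast
      next
        fix a b assume "a \<in> D'" "b \<in> D'"
        hence ab: "a \<in> D" "b \<in> D" "d \<le> a" unfolding D'_def by auto
        then obtain c where c: "c \<in> D" "a \<le> c" "b \<le> c" using dirD by blast
        hence "d \<le> c" using ab order_trans by blast
        thus "\<exists>c\<in>D'. a \<le> c \<and> b \<le> c" using c unfolding D'_def by blast
      qed
      have d0ub: "upper_bound_of D d0" using H unfolding is_sup_in_def by blast
      have "d \<le> d0" using d0ub d unfolding upper_bound_of_def by blast
      hence d0P: "d0 \<in> Pstar" using Pstar_up dP by blast
      have supD': "is_sup_in Pstar D' d0"
        unfolding is_sup_in_def
      proof (intro conjI ballI impI)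
        show "d0 \<in> Pstar" by (rule d0P)
        show "upper_bound_of D' d0" using d0ub unfolding upper_bound_of_def D'_def by blast
      next
        fix u assume u: "u \<in> Pstar" "upper_bound_of D' u"
        have "upper_bound_of D u"
          unfolding upper_bound_of_def
        proof
          fix a assume a: "a \<in> D"
          then obtain c where "c \<in> D" "a \<le> c" "d \<le> c" using dirD d by blast
          hence "c \<in> D'" "a \<le> c" unfolding D'_def by auto
          thus "a \<le> u" using u(2) unfolding upper_bound_of_def by (meson order_trans)
        qed
        thus "d0 \<le> u" using H unfolding is_sup_in_def by blast
      qed
      have bD': "bounded_above_in Pstar D'"
        using supD' unfolding bounded_above_in_def is_sup_in_def by blast
      have skd: "is_sup_in Q (k ` D') (k d0)"
        using kr D'P dirD' bD' supD' QD unfolding kernel_retraction_def by blast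
      have kD'Q: "k ` D' \<subseteq> Q" using D'P ker QD unfolding kernel_on_def by auto
      have dirk: "directed (k ` D')"
        unfolding directed_def
      proof (intro conjI ballI)
        show "k ` D' \<noteq> {}" using dirD' unfolding directed_def by blast
      next
        fix a b assume "a \<in> k ` D'" "b \<in> k ` D'"
        then obtain a' b' where ab: "a' \<in> D'" "b' \<in> D'" "a = k a'" "b = k b'" by blast
        then obtain c where c: "c \<in> D'" "a' \<le> c" "b' \<le> c" using dirD' unfolding directed_def by blast
        have "k a' \<le> k c" "k b' \<le> k c" using ker c ab D'P unfolding kernel_on_def by blast+
        thus "\<exists>z\<in>k ` D'. a \<le> z \<and> b \<le> z" using c ab by blast
      qed
      have bk: "bounded_above_in Q (k ` D')"
        using skd unfolding bounded_above_in_def is_sup_in_def by blast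
      have "y \<le> k d0" using ker yP d0P H unfolding kernel_on_def by metis
      then obtain e where e: "e \<in> k ` D'" "x \<le> e"
        using wb kD'Q dirk bk skd unfolding way_below_in_def by blast
      then obtain e' where e': "e' \<in> D'" "e = k e'" by blast
      have "k e' \<le> e'" using ker e' D'P unfolding kernel_on_def by blast
      hence "x \<le> e'" using e e' by simp
      thus "\<exists>d\<in>D. x \<le> d" using e' unfolding D'_def by blast
    qed
  qed
  show ?thesis using P1 P2 P3 by blast
qed

end
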